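(* Let $(Y,T,C)$ be a random vector where $T\in\{0,1\}$ is a binary treatment indicator, $C$ is a vector of baseline covariates and $Y\in\mathbb{R}$ is an outcome. Let $Y_1,Y_0$ be potential outcomes with $Y=Y_0(1-T)+Y_1T$, and let $\text{CATE}(c):=\mathbb{E}(Y_1-Y_0\mid C=c)$. Let $f_0(t,c):=\mathbb{E}(Y\mid C=c,T=t)$ (no restriction on its functional form). Assume $(Y_1,Y_0)\perp T\mid C$ (conditional ignorability) and $0<\mathbb{P}(T=1\mid C=c)<1$ for all $c$ (positivity). For a prediction model $f$, define with the squared error loss $L(f,(y,t,c))=(y-f(t,c))^2$: $e_{\text{orig}}(f):=\mathbb{E}\,(Y-f(T,C))^2$ and $e_{\text{switch}}(f):=\mathbb{E}\,(Y^{(b)}-f(T^{(a)},C^{(b)}))^2$, where $(Y^{(a)},T^{(a)},C^{(a)})$ and $(Y^{(b)},T^{(b)},C^{(b)})$ are independent copies of $(Y,T,C)$. Then $$e_{\text{switch}}(f_0)-e_{\text{orig}}(f_0)=\text{Var}(T)\sum_{t\in\{0,1\}}\mathbb{E}_{C\mid T=t}\left(\text{CATE}(C)^2\right),$$ where $\text{Var}(T)$ is the marginal variance of $T$ and $\mathbb{E}_{C\mid T=t}$ denotes expectation over the conditional distribution of $C$ given $T=t$.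
   Context: $e_{\text{switch}}(f)$ is the expected loss of $f$ on an observation whose treatment value has been replaced by the treatment value of an independent observation from the same distribution. *)

theory Defs
  imports "HOL-Probability.Probability"
begin

definition gen_sigma :: "'a measure \<Rightarrow> 'd measure \<Rightarrow> ('a \<Rightarrow> 'd) \<Rightarrow> 'a measure" where
  "gen_sigma M MZ Z = vimage_algebra (space M) Z MZ"

definition cond_prob_given :: "'a measure \<Rightarrow> 'a measure \<Rightarrow> 'a set \<Rightarrow> 'a \<Rightarrow> real" where
  "cond_prob_given M F A = real_cond_exp M F (indicator A)"

definition cond_indep ::
  "'a measure \<Rightarrow> 'b measure \<Rightarrow> ('a \<Rightarrow> 'b) \<Rightarrow> 'c measure \<Rightarrow> ('a \<Rightarrow> 'c)
     \<Rightarrow> 'd measure \<Rightarrow> ('a \<Rightarrow> 'd) \<Rightarrow> bool" where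
  "cond_indep M MX X MY Y MZ Z \<longleftrightarrow>
     (\<forall>A\<in>sets MX. \<forall>B\<in>sets MY. AE w in M.
        cond_prob_given M (gen_sigma M MZ Z)
           ({v\<in>space M. X v \<in> A} \<inter> {v\<in>space M. Y v \<in> B}) w
        = cond_prob_given M (gen_sigma M MZ Z) {v\<in>space M. X v \<in> A} w
          * cond_prob_given M (gen_sigma M MZ Z) {v\<in>space M. Y v \<in> B} w)"

definition expectation_given_event :: "'a measure \<Rightarrow> 'a set \<Rightarrow> ('a \<Rightarrow> real) \<Rightarrow> real" where
  "expectation_given_event M A g = (\<integral>w. g w * indicator A w \<partial>M) / measure M A"

end

theory Submission
  imports Defs
begin


lemma prod_integral:
  fixes u v :: "'a \<Rightarrow> real"
  assumes ps: "prob_space M" and u: "integrable M u" and v: "integrable M v"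
  shows "integrable (M \<Otimes>\<^sub>M M) (\<lambda>p. u (fst p) * v (snd p))"
    and "(\<integral>p. u (fst p) * v (snd p) \<partial>(M \<Otimes>\<^sub>M M)) = integral\<^sup>L M u * integral\<^sup>L M v"
proof -
  interpret P: prob_space M by (rule ps)
  interpret PP: pair_sigma_finite M M by unfold_locales
  have [measurable]: "u \<in> borel_measurable M" "v \<in> borel_measurable M"
    using u v by auto
  show i: "integrable (M \<Otimes>\<^sub>M M) (\<lambda>p. u (fst p) * v (snd p))"
  proof (rule PP.Fubini_integrable)
    show "(\<lambda>p. u (fst p) * v (snd p)) \<in> borel_measurable (M \<Otimes>\<^sub>M M)" by measurable
    have "(\<lambda>x. \<integral>y. norm (u (fst (x, y)) * v (snd (x, y))) \<partial>M) = (\<lambda>x. norm (u x) * (\<integral>y. norm (v y) \<partial>M))"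
      by (simp add: abs_mult)
    then show "integrable M (\<lambda>x. \<integral>y. norm (u (fst (x, y)) * v (snd (x, y))) \<partial>M)"
      using u by simp
    show "AE x in M. integrable M (\<lambda>y. u (fst (x, y)) * v (snd (x, y)))"
      using v by simp
  qed
  have "(\<integral>p. u (fst p) * v (snd p) \<partial>(M \<Otimes>\<^sub>M M)) = (\<integral>x. (\<integral>y. u (fst (x,y)) * v (snd (x,y)) \<partial>M) \<partial>M)"
    using PP.integral_fst'[OF i] by simp
  also have "\<dots> = (\<integral>x. u x * integral\<^sup>L M v \<partial>M)" by simp
  also have "\<dots> = integral\<^sup>L M u * integral\<^sup>L M v" by simp
  finally show "(\<integral>p. u (fst p) * v (snd p) \<partial>(M \<Otimes>\<^sub>M M)) = integral\<^sup>L M u * integral\<^sup>L M v" .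
qed

lemma int_mult_sq:
  fixes f g :: "'a \<Rightarrow> real"
  assumes "integrable M (\<lambda>x. (f x)\<^sup>2)" "integrable M (\<lambda>x. (g x)\<^sup>2)"
    "f \<in> borel_measurable M" "g \<in> borel_measurable M"
  shows "integrable M (\<lambda>x. f x * g x)"
proof (rule Bochner_Integration.integrable_bound[where f="\<lambda>x. (f x)\<^sup>2 + (g x)\<^sup>2"])
  show "integrable M (\<lambda>x. (f x)\<^sup>2 + (g x)\<^sup>2)" using assms by simp
  show "(\<lambda>x. f x * g x) \<in> borel_measurable M" using assms by simp
  show "AE x in M. norm (f x * g x) \<le> norm ((f x)\<^sup>2 + (g x)\<^sup>2)"
  proof (rule AE_I2)
    fix x
    have "0 \<le> (\<bar>f x\<bar> - \<bar>g x\<bar>)\<^sup>2" by simp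
    then have "2 * (\<bar>f x\<bar> * \<bar>g x\<bar>) \<le> (f x)\<^sup>2 + (g x)\<^sup>2"
      by (simp add: power2_eq_square algebra_simps)
    moreover have "\<bar>f x\<bar> * \<bar>g x\<bar> \<ge> 0" by simp
    ultimately show "norm (f x * g x) \<le> norm ((f x)\<^sup>2 + (g x)\<^sup>2)"
      by (simp only: norm_mult real_norm_def)
  qed
qed

lemma int_bdd_mult:
  fixes f h :: "'a \<Rightarrow> real"
  assumes "integrable M f" "h \<in> borel_measurable M" "AE x in M. \<bar>h x\<bar> \<le> c"
  shows "integrable M (\<lambda>x. h x * f x)"
proof (rule Bochner_Integration.integrable_bound[where f="\<lambda>x. c * f x"])
  show "integrable M (\<lambda>x. c * f x)" using assms by simp
  show "(\<lambda>x. h x * f x) \<in> borel_measurable M" using assms by simp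
  show "AE x in M. norm (h x * f x) \<le> norm (c * f x)"
    using assms(3) by eventually_elim (auto simp: abs_mult intro: mult_right_mono)
qed

lemma ext_indicator:
  fixes X \<phi> :: "'a \<Rightarrow> real"
  assumes X[measurable]: "X \<in> borel_measurable M" and Xi: "integrable M X"
    and \<phi>[measurable]: "\<phi> \<in> borel_measurable M" and bd: "AE w in M. \<bar>\<phi> w\<bar> \<le> 1"
    and base: "\<And>A. A \<in> sets borel \<Longrightarrow> (\<integral>w. \<phi> w * indicator A (X w) \<partial>M) = 0"
  shows "(\<integral>w. \<phi> w * X w \<partial>M) = 0"
proof -
  let ?N = "distr M borel X"
  have iN: "integrable ?N (\<lambda>x. x)" using Xi by (simp add: integrable_distr_eq)
  have intg: "integrable M (\<lambda>w. \<phi> w * h (X w))" if "integrable ?N h" for h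
  proof -
    have [measurable]: "h \<in> borel_measurable borel" using that by (auto dest: borel_measurable_integrable)
    have "integrable M (\<lambda>w. h (X w))" using that by (simp add: integrable_distr_eq)
    then show ?thesis using bd by (intro int_bdd_mult[where c=1]) auto
  qed
  have "(\<integral>w. \<phi> w * h (X w) \<partial>M) = 0" if "integrable ?N h" for h
    using that
  proof (induction rule: integrable_induct)
    case (base A c)
    then have "A \<in> sets borel" by simp
    then have "(\<integral>w. \<phi> w * indicator A (X w) \<partial>M) = 0" by (rule assms(5))
    then show ?case by (simp add: mult.assoc[symmetric])
  next
    case (add f g)
    then show ?case using add intg[of f] intg[of g] by (simp add: distrib_left)
  next
    case (lim f s)
    have [measurable]: "f \<in> borel_measurable borel" using lim(4) by (auto dest: borel_measurable_integrable)
    have sm[measurable]: "s i \<in> borel_measurable borel" for i using lim(1)[of i] by (auto dest: borel_measurable_integrable)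
    have fi: "integrable M (\<lambda>w. f (X w))" using lim(4) by (simp add: integrable_distr_eq)
    have "(\<lambda>i. \<integral>w. \<phi> w * s i (X w) \<partial>M) \<longlonglongrightarrow> (\<integral>w. \<phi> w * f (X w) \<partial>M)"
    proof (rule integral_dominated_convergence[where w="\<lambda>w. 2 * norm (f (X w))"])
      show "(\<lambda>w. \<phi> w * f (X w)) \<in> borel_measurable M" by measurable
      show "(\<lambda>w. \<phi> w * s i (X w)) \<in> borel_measurable M" for i by measurable
      show "integrable M (\<lambda>w. 2 * norm (f (X w)))" using fi by simp
      show "AE w in M. (\<lambda>i. \<phi> w * s i (X w)) \<longlonglongrightarrow> \<phi> w * f (X w)"
        using lim(2) by (intro AE_I2 tendsto_mult tendsto_const) (simp add: measurable_space[OF X])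
      show "AE w in M. norm (\<phi> w * s i (X w)) \<le> 2 * norm (f (X w))" for i
      proof (rule AE_mp[OF bd], rule AE_I2, rule impI)
        fix w assume w: "w \<in> space M" and e: "\<bar>\<phi> w\<bar> \<le> 1"
        have "norm (s i (X w)) \<le> 2 * norm (f (X w))" using lim(3)[of "X w" i] measurable_space[OF X w] by simp
        then show "norm (\<phi> w * s i (X w)) \<le> 2 * norm (f (X w))" using e by (simp add: abs_mult) (smt (verit) abs_ge_zero mult_left_le_one_le)
      qed
    qed
    then show ?case using lim(5) by (simp add: LIMSEQ_const_iff)
  qed
  from this[OF iN] show ?thesis .
qed



lemma abs_mult_le1: "0 \<le> (x::real) \<Longrightarrow> x \<le> 1 \<Longrightarrow> 0 \<le> y \<Longrightarrow> y \<le> 1 \<Longrightarrow> \<bar>x * y\<bar> \<le> 1"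
  by (simp add: abs_mult mult_le_one)

lemma gen_sub:
  assumes "Z \<in> measurable M N"
  shows "subalgebra M (gen_sigma M N Z)"
  unfolding subalgebra_def gen_sigma_def
  using assms by (auto simp: sets_vimage_algebra2 measurable_space measurable_sets)

lemma gen_meas:
  assumes "Z \<in> measurable M N"
  shows "Z \<in> measurable (gen_sigma M N Z) N"
  unfolding gen_sigma_def
  using assms by (intro measurable_vimage_algebra1) (auto simp: measurable_space)

lemma gen_sets:
  assumes "Z \<in> measurable M N" "A \<in> sets N"
  shows "Z -` A \<inter> space M \<in> sets (gen_sigma M N Z)"
  unfolding gen_sigma_def by (rule in_vimage_algebra[OF assms(2)])

lemma cmi:
  fixes M :: "'a measure" and T X :: "'a \<Rightarrow> real" and C :: "'a \<Rightarrow> 'c::topological_space"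
  assumes ps: "prob_space M"
    and [measurable]: "T \<in> borel_measurable M" "C \<in> borel_measurable M" "X \<in> borel_measurable M"
    and Xi: "integrable M X"
    and T_bin: "\<forall>w\<in>space M. T w \<in> {0, 1}"
    and ci: "\<And>A B. A \<in> sets borel \<Longrightarrow> B \<in> sets borel \<Longrightarrow> AE w in M.
        real_cond_exp M (gen_sigma M borel C) (indicator ({v\<in>space M. X v \<in> A} \<inter> {v\<in>space M. T v \<in> B})) w
      = real_cond_exp M (gen_sigma M borel C) (indicator {v\<in>space M. X v \<in> A}) w
        * real_cond_exp M (gen_sigma M borel C) (indicator {v\<in>space M. T v \<in> B}) w"
  shows "AE w in M. real_cond_exp M (gen_sigma M (borel \<Otimes>\<^sub>M borel) (\<lambda>v. (T v, C v))) X w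
            = real_cond_exp M (gen_sigma M borel C) X w"
proof -
  interpret P: prob_space M by (rule ps)
  define G where "G = gen_sigma M borel C"
  define H where "H = gen_sigma M (borel \<Otimes>\<^sub>M borel) (\<lambda>v. (T v, C v))"
  have TCm[measurable]: "(\<lambda>v. (T v, C v)) \<in> measurable M (borel \<Otimes>\<^sub>M borel)" by measurable
  interpret G: finite_measure_subalgebra M G
    by unfold_locales (simp add: G_def gen_sub)
  interpret H: finite_measure_subalgebra M H
    by unfold_locales (simp add: H_def gen_sub)
  have CG[measurable]: "C \<in> borel_measurable G" unfolding G_def by (rule gen_meas) measurable
  have TCH[measurable]: "(\<lambda>v. (T v, C v)) \<in> measurable H (borel \<Otimes>\<^sub>M borel)"
    unfolding H_def by (rule gen_meas) measurable
  have spG: "space G = space M" and spH: "space H = space M"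
    by (simp_all add: G_def H_def gen_sigma_def)
  have subHG: "subalgebra H G"
  proof -
    have "sets G \<subseteq> sets H"
    proof
      fix A assume "A \<in> sets G"
      then obtain B where B: "B \<in> sets borel" "A = C -` B \<inter> space M"
        unfolding G_def gen_sigma_def by (auto simp: sets_vimage_algebra2)
      have "A = (\<lambda>v. (T v, C v)) -` (UNIV \<times> B) \<inter> space M" using B by auto
      moreover have "UNIV \<times> B \<in> sets (borel \<Otimes>\<^sub>M borel :: (real \<times> 'c) measure)"
        using B by (intro pair_measureI) auto
      ultimately show "A \<in> sets H" unfolding H_def by (simp add: gen_sets[OF TCm])
    qed
    then show ?thesis using spG spH by (simp add: subalgebra_def)
  qed
  define m where "m = real_cond_exp M G X"
  have mG[measurable]: "m \<in> borel_measurable G" unfolding m_def by simp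
  have mM[measurable]: "m \<in> borel_measurable M" unfolding m_def by simp
  have mi: "integrable M m" unfolding m_def using Xi by (rule G.real_cond_exp_int(1))
  have core: "(\<integral>w. (indicator {v\<in>space M. T v \<in> B} w * indicator (C -` U \<inter> space M) w) * X w \<partial>M)
      = (\<integral>w. (indicator {v\<in>space M. T v \<in> B} w * indicator (C -` U \<inter> space M) w) * m w \<partial>M)"
    if B: "B \<in> sets borel" and U: "U \<in> sets borel" for B U
  proof -
    define b :: "'a \<Rightarrow> real" where "b = indicator {v\<in>space M. T v \<in> B}"
    define u :: "'a \<Rightarrow> real" where "u = indicator (C -` U \<inter> space M)"
    define qB where "qB = real_cond_exp M G b"
    have uG[measurable]: "u \<in> borel_measurable G"
      unfolding u_def using gen_sets[of C M borel U] U G_def by auto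
    have uM[measurable]: "u \<in> borel_measurable M" using uG measurable_from_subalg[OF G.subalg] by blast
    have bM[measurable]: "b \<in> borel_measurable M" unfolding b_def using B by measurable
    have qG[measurable]: "qB \<in> borel_measurable G" "qB \<in> borel_measurable M" unfolding qB_def by simp_all
    have u01: "\<And>w. 0 \<le> u w \<and> u w \<le> 1" "\<And>w. 0 \<le> b w \<and> b w \<le> 1" by (auto simp: u_def b_def indicator_def)
    have bi: "integrable M b"
      by (rule P.integrable_const_bound[where B=1]) (use u01(2) bM in auto)
    have q0: "AE w in M. 0 \<le> qB w" unfolding qB_def
      by (rule G.real_cond_exp_ge_c[OF bi]) (auto simp: b_def)
    have q1: "AE w in M. qB w \<le> 1" unfolding qB_def
      by (rule G.real_cond_exp_le_c[OF bi]) (auto simp: b_def indicator_def)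
    have uqb: "AE w in M. \<bar>u w * qB w\<bar> \<le> 1" using q0 q1
      by eventually_elim (use u01 in \<open>auto simp: abs_mult intro: mult_le_one\<close>)
    have s1: "(\<integral>w. (b w * u w) * m w \<partial>M) = (\<integral>w. (u w * qB w) * m w \<partial>M)"
    proof -
      have i1: "integrable M (\<lambda>x. (u x * m x) * b x)"
        using int_bdd_mult[OF mi, of "\<lambda>w. u w * b w" 1] u01
        by (simp add: mult_ac abs_mult mult_le_one)
      have "(\<integral>w. (u w * m w) * qB w \<partial>M) = (\<integral>w. (u w * m w) * b w \<partial>M)"
        unfolding qB_def by (rule G.real_cond_exp_intg(2)[OF i1]) measurable
      then show ?thesis by (simp add: mult_ac)
    qed
    have s2: "(\<integral>w. (u w * qB w) * m w \<partial>M) = (\<integral>w. (u w * qB w) * X w \<partial>M)"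
    proof -
      have i1: "integrable M (\<lambda>x. (u x * qB x) * X x)"
        using int_bdd_mult[OF Xi, of "\<lambda>w. u w * qB w" 1] uqb by simp
      show ?thesis
        unfolding m_def by (rule G.real_cond_exp_intg(2)[OF i1]) measurable
    qed
    have s3: "(\<integral>w. (u w * (b w - qB w)) * X w \<partial>M) = 0"
    proof (rule ext_indicator)
      show "(\<lambda>w. u w * (b w - qB w)) \<in> borel_measurable M" by measurable
      show "AE w in M. \<bar>u w * (b w - qB w)\<bar> \<le> 1" using q0 q1
      proof eventually_elim
        case (elim w)
        have "\<bar>b w - qB w\<bar> \<le> 1" using elim u01(2)[of w] by auto
        then show ?case using u01(1)[of w] by (simp add: abs_mult mult_le_one)
      qed
      show "integrable M X" by (fact Xi)
      show "X \<in> borel_measurable M" by measurable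
      fix A :: "real set" assume A: "A \<in> sets borel"
      define a :: "'a \<Rightarrow> real" where "a = indicator {v\<in>space M. X v \<in> A}"
      define ab :: "'a \<Rightarrow> real" where "ab = indicator ({v\<in>space M. X v \<in> A} \<inter> {v\<in>space M. T v \<in> B})"
      have aM[measurable]: "a \<in> borel_measurable M" unfolding a_def using A by measurable
      have abM[measurable]: "ab \<in> borel_measurable M" unfolding ab_def using A B by measurable
      have a01: "\<And>w. 0 \<le> a w \<and> a w \<le> 1" "\<And>w. 0 \<le> ab w \<and> ab w \<le> 1"
        by (auto simp: a_def ab_def indicator_def)
      have ai: "integrable M a"
        by (rule P.integrable_const_bound[where B=1]) (use a01 aM in auto)
      have e1: "(\<integral>w. u w * ab w \<partial>M) = (\<integral>w. u w * real_cond_exp M G ab w \<partial>M)"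
      proof -
        have i1: "integrable M (\<lambda>x. u x * ab x)"
          by (rule P.integrable_const_bound[where B=1]) (use u01 a01 in \<open>auto intro!: AE_I2 abs_mult_le1 mult_le_one\<close>)
        show ?thesis by (rule G.real_cond_exp_intg(2)[OF i1, symmetric]) measurable
      qed
      have e2: "(\<integral>w. u w * real_cond_exp M G ab w \<partial>M) = (\<integral>w. (u w * qB w) * real_cond_exp M G a w \<partial>M)"
      proof (rule integral_cong_AE)
        show "(\<lambda>w. u w * real_cond_exp M G ab w) \<in> borel_measurable M" by measurable
        show "(\<lambda>w. (u w * qB w) * real_cond_exp M G a w) \<in> borel_measurable M" by measurable
        show "AE w in M. u w * real_cond_exp M G ab w = (u w * qB w) * real_cond_exp M G a w"
          using ci[OF A B] unfolding G_def[symmetric] ab_def a_def qB_def b_def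
          by eventually_elim simp
      qed
      have e3: "(\<integral>w. (u w * qB w) * real_cond_exp M G a w \<partial>M) = (\<integral>w. (u w * qB w) * a w \<partial>M)"
      proof -
        have i1: "integrable M (\<lambda>x. (u x * qB x) * a x)"
          by (rule int_bdd_mult[OF ai, where c=1]) (simp_all add: uqb)
        show ?thesis by (rule G.real_cond_exp_intg(2)[OF i1]) measurable
      qed
      have "(\<integral>w. u w * (b w - qB w) * indicator A (X w) \<partial>M) = (\<integral>w. u w * ab w - (u w * qB w) * a w \<partial>M)"
        by (rule Bochner_Integration.integral_cong) (auto simp: a_def ab_def b_def indicator_def algebra_simps)
      also have "\<dots> = (\<integral>w. u w * ab w \<partial>M) - (\<integral>w. (u w * qB w) * a w \<partial>M)"
      proof (rule Bochner_Integration.integral_diff)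
        show "integrable M (\<lambda>x. u x * ab x)"
          by (rule P.integrable_const_bound[where B=1]) (use u01 a01 in \<open>auto intro!: AE_I2 abs_mult_le1 mult_le_one\<close>)
        show "integrable M (\<lambda>x. (u x * qB x) * a x)"
          by (rule int_bdd_mult[OF ai, where c=1]) (simp_all add: uqb)
      qed
      also have "\<dots> = 0" using e1 e2 e3 by simp
      finally show "(\<integral>w. u w * (b w - qB w) * indicator A (X w) \<partial>M) = 0" .
    qed
    have s4: "(\<integral>w. (b w * u w) * X w \<partial>M) = (\<integral>w. (u w * qB w) * X w \<partial>M)"
    proof -
      have i1: "integrable M (\<lambda>x. (b x * u x) * X x)"
        by (rule int_bdd_mult[OF Xi]) (use u01 in \<open>auto intro!: AE_I2 abs_mult_le1 mult_le_one\<close>)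
      have i2: "integrable M (\<lambda>x. (u x * qB x) * X x)"
        using int_bdd_mult[OF Xi, of "\<lambda>w. u w * qB w" 1] uqb by simp
      have "(\<integral>w. (u w * (b w - qB w)) * X w \<partial>M) = (\<integral>w. (b w * u w) * X w - (u w * qB w) * X w \<partial>M)"
        by (rule Bochner_Integration.integral_cong) (auto simp: algebra_simps)
      also have "\<dots> = (\<integral>w. (b w * u w) * X w \<partial>M) - (\<integral>w. (u w * qB w) * X w \<partial>M)"
        using i1 i2 by (rule Bochner_Integration.integral_diff)
      finally show ?thesis using s3 by simp
    qed
    show ?thesis using s1 s2 s4 unfolding b_def u_def by simp
  qed
  have "AE w in M. real_cond_exp M H X w = m w"
  proof (rule H.real_cond_exp_charact)
    show "integrable M X" "integrable M m" by (fact Xi, fact mi)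
    show "m \<in> borel_measurable H" using mG measurable_from_subalg[OF subHG] by blast
    fix S assume "S \<in> sets H"
    then obtain U where U: "U \<in> sets (borel \<Otimes>\<^sub>M borel)" "S = (\<lambda>v. (T v, C v)) -` U \<inter> space M"
      unfolding H_def gen_sigma_def by (auto simp: sets_vimage_algebra2 space_pair_measure)
    define U1 where "U1 = Pair (1::real) -` U"
    define U0 where "U0 = Pair (0::real) -` U"
    have U1: "U1 \<in> sets borel" "U0 \<in> sets borel" using U(1) unfolding U1_def U0_def
      by (auto intro: sets_Pair1)
    define I :: "real set \<Rightarrow> 'c set \<Rightarrow> 'a \<Rightarrow> real"
      where "I = (\<lambda>B V w. indicator {v\<in>space M. T v \<in> B} w * indicator (C -` V \<inter> space M) w)"
    have Im[measurable]: "I B V \<in> borel_measurable M" if "B \<in> sets borel" "V \<in> sets borel" for B V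
    proof -
      have "C -` V \<inter> space M \<in> sets M" using that(2) by (rule measurable_sets[rotated]) measurable
      then show ?thesis unfolding I_def using that(1) by measurable
    qed
    have Ib: "\<bar>I B V w\<bar> \<le> 1" for B V w by (auto simp: I_def indicator_def)
    have decomp: "indicator S w = I {1} U1 w + I {0} U0 w" if w: "w \<in> space M" for w
      using T_bin w by (auto simp: U(2) I_def U1_def U0_def indicator_def)
    have int_eq: "(\<integral>x\<in>S. f x \<partial>M) = (\<integral>w. I {1} U1 w * f w \<partial>M) + (\<integral>w. I {0} U0 w * f w \<partial>M)"
      if f: "integrable M f" for f
    proof -
      have "(\<integral>x\<in>S. f x \<partial>M) = (\<integral>w. I {1} U1 w * f w + I {0} U0 w * f w \<partial>M)"
        unfolding set_lebesgue_integral_def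
        by (rule Bochner_Integration.integral_cong) (auto simp: decomp distrib_right)
      also have "\<dots> = (\<integral>w. I {1} U1 w * f w \<partial>M) + (\<integral>w. I {0} U0 w * f w \<partial>M)"
      proof (rule Bochner_Integration.integral_add)
        show "integrable M (\<lambda>w. I {1} U1 w * f w)"
          by (rule int_bdd_mult[OF f, where c=1]) (use U1 Ib in auto)
        show "integrable M (\<lambda>w. I {0} U0 w * f w)"
          by (rule int_bdd_mult[OF f, where c=1]) (use U1 Ib in auto)
      qed
      finally show ?thesis .
    qed
    show "(\<integral>x\<in>S. X x \<partial>M) = (\<integral>x\<in>S. m x \<partial>M)"
      using int_eq[OF Xi] int_eq[OF mi] core[of "{1}" U1] core[of "{0}" U0] U1
      unfolding I_def by simp
  qed
  then show ?thesis unfolding G_def H_def m_def .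
qed



lemma sq_add_int:
  fixes f g :: "'a \<Rightarrow> real"
  assumes "integrable M (\<lambda>x. (f x)\<^sup>2)" "integrable M (\<lambda>x. (g x)\<^sup>2)"
    "f \<in> borel_measurable M" "g \<in> borel_measurable M"
  shows "integrable M (\<lambda>x. (f x + g x)\<^sup>2)" "integrable M (\<lambda>x. (f x - g x)\<^sup>2)"
proof -
  have m: "integrable M (\<lambda>x. f x * g x)" by (rule int_mult_sq[OF assms])
  have "integrable M (\<lambda>x. (f x)\<^sup>2 + (g x)\<^sup>2 + 2 * (f x * g x))"
    using assms m by simp
  moreover have "(\<lambda>x. (f x + g x)\<^sup>2) = (\<lambda>x. (f x)\<^sup>2 + (g x)\<^sup>2 + 2 * (f x * g x))"
    by (simp add: power2_sum mult.assoc)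
  ultimately show "integrable M (\<lambda>x. (f x + g x)\<^sup>2)" by simp
  have "integrable M (\<lambda>x. (f x)\<^sup>2 + (g x)\<^sup>2 - 2 * (f x * g x))"
    using assms m by simp
  moreover have "(\<lambda>x. (f x - g x)\<^sup>2) = (\<lambda>x. (f x)\<^sup>2 + (g x)\<^sup>2 - 2 * (f x * g x))"
    by (simp add: power2_diff mult.assoc)
  ultimately show "integrable M (\<lambda>x. (f x - g x)\<^sup>2)" by simp
qed

theorem theorem1:
  fixes M :: "'a measure"
    and Y Y0 Y1 T :: "'a \<Rightarrow> real"
    and C :: "'a \<Rightarrow> real ^ 'k"
    and f0 :: "real \<Rightarrow> real ^ 'k \<Rightarrow> real"
    and cate :: "real ^ 'k \<Rightarrow> real"
  assumes ps: "prob_space M"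
    and T_meas: "T \<in> borel_measurable M"
    and C_meas: "C \<in> borel_measurable M"
    and Y0_meas: "Y0 \<in> borel_measurable M"
    and Y1_meas: "Y1 \<in> borel_measurable M"
    and T_bin: "\<forall>w\<in>space M. T w \<in> {0, 1}"
    and Y0_sq: "integrable M (\<lambda>w. (Y0 w)\<^sup>2)"
    and Y1_sq: "integrable M (\<lambda>w. (Y1 w)\<^sup>2)"
    and Y_def: "\<forall>w\<in>space M. Y w = Y0 w * (1 - T w) + Y1 w * T w"
    and cate_meas: "cate \<in> borel_measurable borel"
    and cate_def: "AE w in M. cate (C w) =
          real_cond_exp M (gen_sigma M borel C) (\<lambda>v. Y1 v - Y0 v) w"
    and f0_meas: "(\<lambda>(t, c). f0 t c) \<in> borel_measurable (borel \<Otimes>\<^sub>M borel)"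
    and f0_def: "AE w in M. f0 (T w) (C w) =
          real_cond_exp M (gen_sigma M (borel \<Otimes>\<^sub>M borel) (\<lambda>v. (T v, C v))) Y w"
    and ignorability: "cond_indep M (borel \<Otimes>\<^sub>M borel) (\<lambda>w. (Y1 w, Y0 w)) borel T borel C"
    and positivity: "AE w in M. 0 < cond_prob_given M (gen_sigma M borel C) {v\<in>space M. T v = 1} w
                           \<and> cond_prob_given M (gen_sigma M borel C) {v\<in>space M. T v = 1} w < 1"
  shows "(\<integral>p. (Y (snd p) - f0 (T (fst p)) (C (snd p)))\<^sup>2 \<partial>(M \<Otimes>\<^sub>M M))
           - (\<integral>w. (Y w - f0 (T w) (C w))\<^sup>2 \<partial>M)
         = prob_space.variance M T *
           (\<Sum>t\<in>{0::real, 1}. expectation_given_event M {w\<in>space M. T w = t} (\<lambda>w. (cate (C w))\<^sup>2))"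
proof -
  interpret P: prob_space M by (rule ps)
  define G where "G = gen_sigma M borel C"
  define H where "H = gen_sigma M (borel \<Otimes>\<^sub>M borel) (\<lambda>v. (T v, C v))"
  have [measurable]: "T \<in> borel_measurable M" "C \<in> borel_measurable M"
    "Y0 \<in> borel_measurable M" "Y1 \<in> borel_measurable M" "cate \<in> borel_measurable borel"
    using assms by auto
  have f0m[measurable]: "(\<lambda>x. f0 (fst x) (snd x)) \<in> borel_measurable (borel \<Otimes>\<^sub>M borel)"
    using f0_meas by (simp add: split_beta')
  have Ym[measurable]: "Y \<in> borel_measurable M"
  proof -
    have "(\<lambda>w. Y0 w * (1 - T w) + Y1 w * T w) \<in> borel_measurable M" by measurable
    then show ?thesis by (rule measurable_cong[THEN iffD1, rotated]) (use Y_def in auto)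
  qed
  have TCm[measurable]: "(\<lambda>v. (T v, C v)) \<in> measurable M (borel \<Otimes>\<^sub>M borel)" by measurable
  interpret G: finite_measure_subalgebra M G
    by unfold_locales (simp add: G_def gen_sub)
  interpret H: finite_measure_subalgebra M H
    by unfold_locales (simp add: H_def gen_sub)
  have CG[measurable]: "C \<in> borel_measurable G" unfolding G_def by (rule gen_meas) measurable
  have TCH[measurable]: "(\<lambda>v. (T v, C v)) \<in> measurable H (borel \<Otimes>\<^sub>M borel)"
    unfolding H_def by (rule gen_meas) measurable
  have TH[measurable]: "T \<in> borel_measurable H"
    using measurable_compose[OF TCH measurable_fst] by simp
  have CH[measurable]: "C \<in> borel_measurable H"
    using measurable_compose[OF TCH measurable_snd] by simp
  have f0t[measurable]: "f0 t \<in> borel_measurable borel" for t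
  proof -
    have "(\<lambda>c. (t, c)) \<in> measurable borel (borel \<Otimes>\<^sub>M borel)" by measurable
    from measurable_compose[OF this f0m] show ?thesis by simp
  qed
  have Y0i: "integrable M Y0" by (rule P.square_integrable_imp_integrable) (simp_all add: Y0_sq)
  have Y1i: "integrable M Y1" by (rule P.square_integrable_imp_integrable) (simp_all add: Y1_sq)
  define m1 where "m1 = real_cond_exp M G Y1"
  define m0 where "m0 = real_cond_exp M G Y0"
  have m1m[measurable]: "m1 \<in> borel_measurable G" "m1 \<in> borel_measurable M" unfolding m1_def by simp_all
  have m0m[measurable]: "m0 \<in> borel_measurable G" "m0 \<in> borel_measurable M" unfolding m0_def by simp_all
  have ciY1: "AE w in M.
        real_cond_exp M (gen_sigma M borel C) (indicator ({v\<in>space M. Y1 v \<in> A} \<inter> {v\<in>space M. T v \<in> B})) w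
      = real_cond_exp M (gen_sigma M borel C) (indicator {v\<in>space M. Y1 v \<in> A}) w
        * real_cond_exp M (gen_sigma M borel C) (indicator {v\<in>space M. T v \<in> B}) w"
    if "A \<in> sets borel" "B \<in> sets borel" for A B
  proof -
    have "A \<times> UNIV \<in> sets (borel \<Otimes>\<^sub>M borel :: (real \<times> real) measure)" using that by (intro pair_measureI) auto
    then have "AE w in M.
        real_cond_exp M (gen_sigma M borel C) (indicator ({v\<in>space M. (Y1 v, Y0 v) \<in> A \<times> UNIV} \<inter> {v\<in>space M. T v \<in> B})) w
      = real_cond_exp M (gen_sigma M borel C) (indicator {v\<in>space M. (Y1 v, Y0 v) \<in> A \<times> UNIV}) w
        * real_cond_exp M (gen_sigma M borel C) (indicator {v\<in>space M. T v \<in> B}) w"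
      by (rule ignorability[unfolded cond_indep_def cond_prob_given_def, rule_format, OF _ that(2)])
    moreover have "{v\<in>space M. (Y1 v, Y0 v) \<in> A \<times> UNIV} = {v\<in>space M. Y1 v \<in> A}" by auto
    ultimately show ?thesis by simp
  qed
  have ciY0: "AE w in M.
        real_cond_exp M (gen_sigma M borel C) (indicator ({v\<in>space M. Y0 v \<in> A} \<inter> {v\<in>space M. T v \<in> B})) w
      = real_cond_exp M (gen_sigma M borel C) (indicator {v\<in>space M. Y0 v \<in> A}) w
        * real_cond_exp M (gen_sigma M borel C) (indicator {v\<in>space M. T v \<in> B}) w"
    if "A \<in> sets borel" "B \<in> sets borel" for A B
  proof -
    have "UNIV \<times> A \<in> sets (borel \<Otimes>\<^sub>M borel :: (real \<times> real) measure)" using that by (intro pair_measureI) auto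
    then have "AE w in M.
        real_cond_exp M (gen_sigma M borel C) (indicator ({v\<in>space M. (Y1 v, Y0 v) \<in> UNIV \<times> A} \<inter> {v\<in>space M. T v \<in> B})) w
      = real_cond_exp M (gen_sigma M borel C) (indicator {v\<in>space M. (Y1 v, Y0 v) \<in> UNIV \<times> A}) w
        * real_cond_exp M (gen_sigma M borel C) (indicator {v\<in>space M. T v \<in> B}) w"
      by (rule ignorability[unfolded cond_indep_def cond_prob_given_def, rule_format, OF _ that(2)])
    moreover have "{v\<in>space M. (Y1 v, Y0 v) \<in> UNIV \<times> A} = {v\<in>space M. Y0 v \<in> A}" by auto
    ultimately show ?thesis by simp
  qed
  have cm1: "AE w in M. real_cond_exp M H Y1 w = m1 w"
    unfolding m1_def G_def H_def by (rule cmi[OF ps T_meas C_meas Y1_meas Y1i T_bin ciY1])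
  have cm0: "AE w in M. real_cond_exp M H Y0 w = m0 w"
    unfolding m0_def G_def H_def by (rule cmi[OF ps T_meas C_meas Y0_meas Y0i T_bin ciY0])
  have Tb1: "AE w in M. \<bar>T w\<bar> \<le> 1" "AE w in M. \<bar>1 - T w\<bar> \<le> 1"
    using T_bin by (auto intro!: AE_I2)
  have i0: "integrable M (\<lambda>w. (1 - T w) * Y0 w)" by (rule int_bdd_mult[OF Y0i, where c=1]) (use Tb1 in auto)
  have i1: "integrable M (\<lambda>w. T w * Y1 w)" by (rule int_bdd_mult[OF Y1i, where c=1]) (use Tb1 in auto)
  have fY: "AE w in M. f0 (T w) (C w) = T w * m1 w + (1 - T w) * m0 w"
  proof -
    have e0: "AE w in M. real_cond_exp M H Y w = real_cond_exp M H (\<lambda>w. (1 - T w) * Y0 w + T w * Y1 w) w"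
    proof (rule H.real_cond_exp_cong)
      show "AE w in M. Y w = (1 - T w) * Y0 w + T w * Y1 w" using Y_def by (auto intro!: AE_I2 simp: algebra_simps)
    qed measurable
    have e1: "AE w in M. real_cond_exp M H (\<lambda>w. (1 - T w) * Y0 w + T w * Y1 w) w
        = real_cond_exp M H (\<lambda>w. (1 - T w) * Y0 w) w + real_cond_exp M H (\<lambda>w. T w * Y1 w) w"
      by (rule H.real_cond_exp_add[OF i0 i1])
    have e2: "AE w in M. real_cond_exp M H (\<lambda>w. (1 - T w) * Y0 w) w = (1 - T w) * real_cond_exp M H Y0 w"
      by (rule H.real_cond_exp_mult) (use i0 in auto)
    have e3: "AE w in M. real_cond_exp M H (\<lambda>w. T w * Y1 w) w = T w * real_cond_exp M H Y1 w"
      by (rule H.real_cond_exp_mult) (use i1 in auto)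
    show ?thesis using f0_def[folded H_def] e0 e1 e2 e3 cm1 cm0
      by eventually_elim (simp add: add.commute)
  qed
  have spG: "space G = space M" by (simp add: G_def gen_sigma_def)
  define S1 where "S1 = {v\<in>space M. T v = 1}"
  have S1m[measurable]: "S1 \<in> sets M" unfolding S1_def by measurable
  define q where "q = real_cond_exp M G (indicator S1)"
  have qm[measurable]: "q \<in> borel_measurable G" "q \<in> borel_measurable M" unfolding q_def by simp_all
  have qpos: "AE w in M. 0 < q w \<and> q w < 1"
    using positivity unfolding q_def S1_def G_def cond_prob_given_def .
  have ind01: "0 \<le> (indicator A w :: real) \<and> (indicator A w :: real) \<le> 1" for A and w :: 'a
    by (auto simp: indicator_def)
  have intN: "integrable M (\<lambda>w. indicator N w * indicator S1 w :: real)" if "N \<in> sets M" for N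
  proof -
    have "integrable M (indicator (N \<inter> S1) :: 'a \<Rightarrow> real)"
      using that by (intro integrable_real_indicator) (auto simp: less_top[symmetric])
    then show ?thesis unfolding indicator_inter_arith[symmetric] .
  qed
  have NGM: "N \<in> sets M" if "N \<in> sets G" for N using that G.subalg by (auto simp: subalgebra_def)
  have intNq: "integrable M (\<lambda>w. indicator N w * q w)"
     and intNq_eq: "(\<integral>w. indicator N w * q w \<partial>M) = (\<integral>w. indicator N w * indicator S1 w \<partial>M)"
    if "N \<in> sets G" for N
  proof -
    have [measurable]: "N \<in> sets G" "N \<in> sets M" using that NGM by auto
    show "integrable M (\<lambda>w. indicator N w * q w)" unfolding q_def
      by (rule G.real_cond_exp_intg(1)[OF intN]) measurable
    show "(\<integral>w. indicator N w * q w \<partial>M) = (\<integral>w. indicator N w * indicator S1 w \<partial>M)" unfolding q_def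
      by (rule G.real_cond_exp_intg(2)[OF intN]) measurable
  qed
  have ext1: "AE w in M. w \<notin> N" if N: "N \<in> sets G" and hN: "AE w in M. w \<in> N \<longrightarrow> T w \<noteq> 1" for N
  proof -
    have "AE w in M. indicator N w * indicator S1 w = (0::real)"
      using hN by eventually_elim (auto simp: S1_def indicator_def)
    then have "(\<integral>w. indicator N w * indicator S1 w \<partial>M) = (0::real)" by (rule integral_eq_zero_AE)
    then have "(\<integral>w. indicator N w * q w \<partial>M) = 0" using intNq_eq[OF N] by simp
    moreover have "AE w in M. 0 \<le> indicator N w * q w"
      using qpos by eventually_elim (auto simp: indicator_def)
    ultimately have "AE w in M. indicator N w * q w = 0"
      using integral_nonneg_eq_0_iff_AE[OF intNq[OF N]] by simp
    then show ?thesis using qpos by eventually_elim (auto simp: indicator_def)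
  qed
  have ext0: "AE w in M. w \<notin> N" if N: "N \<in> sets G" and hN: "AE w in M. w \<in> N \<longrightarrow> T w \<noteq> 0" for N
  proof -
    have [measurable]: "N \<in> sets M" using NGM N by auto
    have iN: "integrable M (indicator N :: 'a \<Rightarrow> real)"
      by (intro integrable_real_indicator) (auto simp: less_top[symmetric])
    have "AE w in M. indicator N w * (1 - indicator S1 w) = (0::real)"
      using hN AE_space by eventually_elim (use T_bin in \<open>auto simp: S1_def indicator_def\<close>)
    then have z: "(\<integral>w. indicator N w * (1 - indicator S1 w) \<partial>M) = (0::real)" by (rule integral_eq_zero_AE)
    have "(\<integral>w. indicator N w * (1 - q w) \<partial>M) = (\<integral>w. indicator N w - indicator N w * q w \<partial>M)"
      by (simp add: algebra_simps)
    also have "\<dots> = (\<integral>w. (indicator N w :: real) \<partial>M) - (\<integral>w. indicator N w * q w \<partial>M)"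
      using iN intNq[OF N] by (rule Bochner_Integration.integral_diff)
    also have "\<dots> = (\<integral>w. (indicator N w :: real) \<partial>M) - (\<integral>w. indicator N w * indicator S1 w \<partial>M)"
      using intNq_eq[OF N] by simp
    also have "\<dots> = (\<integral>w. indicator N w - indicator N w * indicator S1 w \<partial>M)"
      using iN intN[of N] by (intro Bochner_Integration.integral_diff[symmetric]) auto
    also have "\<dots> = 0" using z by (simp add: algebra_simps)
    finally have "(\<integral>w. indicator N w * (1 - q w) \<partial>M) = 0" .
    moreover have "integrable M (\<lambda>w. indicator N w * (1 - q w))"
      using iN intNq[OF N] by (simp add: algebra_simps)
    moreover have "AE w in M. 0 \<le> indicator N w * (1 - q w)"
      using qpos by eventually_elim (auto simp: indicator_def)
    ultimately have "AE w in M. indicator N w * (1 - q w) = 0"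
      using integral_nonneg_eq_0_iff_AE by blast
    then show ?thesis using qpos by eventually_elim (auto simp: indicator_def)
  qed
  have f1: "AE w in M. f0 1 (C w) = m1 w"
  proof -
    have "{w\<in>space G. f0 1 (C w) \<noteq> m1 w} \<in> sets G" by measurable
    then have "AE w in M. w \<notin> {w\<in>space G. f0 1 (C w) \<noteq> m1 w}"
      by (rule ext1) (use fY in \<open>eventually_elim, auto\<close>)
    then show ?thesis using AE_space by eventually_elim (auto simp: spG)
  qed
  have f0': "AE w in M. f0 0 (C w) = m0 w"
  proof -
    have "{w\<in>space G. f0 0 (C w) \<noteq> m0 w} \<in> sets G" by measurable
    then have "AE w in M. w \<notin> {w\<in>space G. f0 0 (C w) \<noteq> m0 w}"
      by (rule ext0) (use fY in \<open>eventually_elim, auto\<close>)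
    then show ?thesis using AE_space by eventually_elim (auto simp: spG)
  qed
  have fTCm[measurable]: "(\<lambda>x. f0 (T x) (C x)) \<in> borel_measurable M"
    using measurable_compose[OF TCm f0m] by simp
  have Ysq: "integrable M (\<lambda>w. (Y w)\<^sup>2)"
  proof (rule Bochner_Integration.integrable_bound[where f="\<lambda>w. (Y0 w)\<^sup>2 + (Y1 w)\<^sup>2"])
    show "integrable M (\<lambda>w. (Y0 w)\<^sup>2 + (Y1 w)\<^sup>2)" using Y0_sq Y1_sq by simp
    show "(\<lambda>w. (Y w)\<^sup>2) \<in> borel_measurable M" by measurable
    show "AE w in M. norm ((Y w)\<^sup>2) \<le> norm ((Y0 w)\<^sup>2 + (Y1 w)\<^sup>2)"
    proof (rule AE_I2)
      fix w assume w: "w \<in> space M"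
      then have "T w = 0 \<or> T w = 1" using T_bin by auto
      then show "norm ((Y w)\<^sup>2) \<le> norm ((Y0 w)\<^sup>2 + (Y1 w)\<^sup>2)" using Y_def w by auto
    qed
  qed
  have m1sq: "integrable M (\<lambda>w. (m1 w)\<^sup>2)" unfolding m1_def
    by (rule G.integrable_convex_cond_exp[where I=UNIV and q="\<lambda>x. x\<^sup>2"]) (simp_all add: Y1i Y1_sq convex_power2)
  have m0sq: "integrable M (\<lambda>w. (m0 w)\<^sup>2)" unfolding m0_def
    by (rule G.integrable_convex_cond_exp[where I=UNIV and q="\<lambda>x. x\<^sup>2"]) (simp_all add: Y0i Y0_sq convex_power2)
  have Yi: "integrable M Y" by (rule P.square_integrable_imp_integrable) (simp_all add: Ysq)
  have fsq: "integrable M (\<lambda>w. (f0 (T w) (C w))\<^sup>2)"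
  proof -
    have "integrable M (\<lambda>w. (real_cond_exp M H Y w)\<^sup>2)"
      by (rule H.integrable_convex_cond_exp[where I=UNIV and q="\<lambda>x. x\<^sup>2"]) (simp_all add: Yi Ysq convex_power2)
    moreover have "(\<lambda>w. (f0 (T w) (C w))\<^sup>2) \<in> borel_measurable M" by measurable
    moreover have "AE w in M. (real_cond_exp M H Y w)\<^sup>2 = (f0 (T w) (C w))\<^sup>2"
      using f0_def[folded H_def] by eventually_elim simp
    ultimately show ?thesis by (rule integrable_cong_AE_imp)
  qed
  define R where "R w = Y w - f0 (T w) (C w)" for w
  define D where "D w = f0 1 (C w) - f0 0 (C w)" for w
  have Rm[measurable]: "R \<in> borel_measurable M" unfolding R_def by measurable
  have Dm[measurable]: "D \<in> borel_measurable M" unfolding D_def by measurable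
  have DH[measurable]: "D \<in> borel_measurable H" unfolding D_def by measurable
  have Rsq: "integrable M (\<lambda>w. (R w)\<^sup>2)" unfolding R_def
    by (rule sq_add_int(2)[OF Ysq fsq]) measurable
  have DAE: "AE w in M. D w = m1 w - m0 w" using f1 f0' by eventually_elim (simp add: D_def)
  have Dsq: "integrable M (\<lambda>w. (D w)\<^sup>2)"
  proof -
    have "integrable M (\<lambda>w. (m1 w - m0 w)\<^sup>2)" by (rule sq_add_int(2)[OF m1sq m0sq]) measurable
    moreover have "(\<lambda>w. (D w)\<^sup>2) \<in> borel_measurable M" by measurable
    moreover have "AE w in M. (m1 w - m0 w)\<^sup>2 = (D w)\<^sup>2" using DAE by eventually_elim simp
    ultimately show ?thesis by (rule integrable_cong_AE_imp)
  qed
  have cateAE: "AE w in M. cate (C w) = D w"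
    using cate_def[folded G_def] G.real_cond_exp_diff[OF Y1i Y0i] DAE
    by eventually_elim (simp add: m1_def m0_def)
  have orth: "(\<integral>w. Z w * R w \<partial>M) = 0"
    if ZH[measurable]: "Z \<in> borel_measurable H" and Zsq: "integrable M (\<lambda>w. (Z w)\<^sup>2)" for Z
  proof -
    have ZM[measurable]: "Z \<in> borel_measurable M" using measurable_from_subalg[OF H.subalg ZH] .
    have iZY: "integrable M (\<lambda>w. Z w * Y w)" by (rule int_mult_sq[OF Zsq Ysq]) measurable
    have iZf: "integrable M (\<lambda>w. Z w * f0 (T w) (C w))" by (rule int_mult_sq[OF Zsq fsq]) measurable
    have "(\<integral>w. Z w * f0 (T w) (C w) \<partial>M) = (\<integral>w. Z w * real_cond_exp M H Y w \<partial>M)"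
    proof (rule integral_cong_AE)
      show "AE w in M. Z w * f0 (T w) (C w) = Z w * real_cond_exp M H Y w"
        using f0_def[folded H_def] by eventually_elim simp
    qed measurable
    also have "\<dots> = (\<integral>w. Z w * Y w \<partial>M)"
      by (rule H.real_cond_exp_intg(2)[OF iZY]) measurable
    finally have e: "(\<integral>w. Z w * f0 (T w) (C w) \<partial>M) = (\<integral>w. Z w * Y w \<partial>M)" .
    have "(\<integral>w. Z w * R w \<partial>M) = (\<integral>w. Z w * Y w - Z w * f0 (T w) (C w) \<partial>M)"
      unfolding R_def by (simp add: right_diff_distrib)
    also have "\<dots> = (\<integral>w. Z w * Y w \<partial>M) - (\<integral>w. Z w * f0 (T w) (C w) \<partial>M)"
      using iZY iZf by (rule Bochner_Integration.integral_diff)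
    finally show ?thesis using e by simp
  qed
  have TDsq: "integrable M (\<lambda>w. (T w * D w)\<^sup>2)"
  proof (rule Bochner_Integration.integrable_bound[OF Dsq])
    show "(\<lambda>w. (T w * D w)\<^sup>2) \<in> borel_measurable M" by measurable
    show "AE w in M. norm ((T w * D w)\<^sup>2) \<le> norm ((D w)\<^sup>2)"
    proof (rule AE_I2)
      fix w assume w: "w \<in> space M"
      then have "T w = 0 \<or> T w = 1" using T_bin by auto
      then show "norm ((T w * D w)\<^sup>2) \<le> norm ((D w)\<^sup>2)" by (elim disjE) simp_all
    qed
  qed
  have o1: "(\<integral>w. D w * R w \<partial>M) = 0" by (rule orth[OF DH Dsq])
  have o2: "(\<integral>w. (T w * D w) * R w \<partial>M) = 0" by (rule orth[OF _ TDsq]) measurable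
  have Ti: "integrable M T"
    by (rule P.integrable_const_bound[where B=1]) (use Tb1 in auto)
  define p where "p = (\<integral>w. T w \<partial>M)"
  have iTD2: "integrable M (\<lambda>w. T w * (D w)\<^sup>2)"
    by (rule int_bdd_mult[OF Dsq, where c=1]) (use Tb1 in auto)
  have iTD2': "integrable M (\<lambda>w. (1 - T w) * (D w)\<^sup>2)"
    by (rule int_bdd_mult[OF Dsq, where c=1]) (use Tb1 in auto)
  have iTDR: "integrable M (\<lambda>w. (T w * D w) * R w)" by (rule int_mult_sq[OF TDsq Rsq]) measurable
  have iDR: "integrable M (\<lambda>w. D w * R w)" by (rule int_mult_sq[OF Dsq Rsq]) measurable
  define v1 where "v1 w = (R w)\<^sup>2 + 2 * ((T w * D w) * R w) + T w * (D w)\<^sup>2" for w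
  define v2 where "v2 w = (D w)\<^sup>2 - 2 * (D w * R w) - 2 * (T w * (D w)\<^sup>2)" for w
  have v1i: "integrable M v1" unfolding v1_def using Rsq iTDR iTD2 by simp
  have v2i: "integrable M v2" unfolding v2_def using Dsq iDR iTD2 by simp
  have v1int: "(\<integral>w. v1 w \<partial>M) = (\<integral>w. (R w)\<^sup>2 \<partial>M) + (\<integral>w. T w * (D w)\<^sup>2 \<partial>M)"
    unfolding v1_def using Rsq iTDR iTD2 o2 by simp
  have v2int: "(\<integral>w. v2 w \<partial>M) = (\<integral>w. (D w)\<^sup>2 \<partial>M) - 2 * (\<integral>w. T w * (D w)\<^sup>2 \<partial>M)"
    unfolding v2_def using Dsq iDR iTD2 o1 by simp
  have D2split: "(\<integral>w. (D w)\<^sup>2 \<partial>M) = (\<integral>w. T w * (D w)\<^sup>2 \<partial>M) + (\<integral>w. (1 - T w) * (D w)\<^sup>2 \<partial>M)"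
  proof -
    have "(\<integral>w. (D w)\<^sup>2 \<partial>M) = (\<integral>w. T w * (D w)\<^sup>2 + (1 - T w) * (D w)\<^sup>2 \<partial>M)"
      by (simp add: algebra_simps)
    also have "\<dots> = (\<integral>w. T w * (D w)\<^sup>2 \<partial>M) + (\<integral>w. (1 - T w) * (D w)\<^sup>2 \<partial>M)"
      using iTD2 iTD2' by (rule Bochner_Integration.integral_add)
    finally show ?thesis .
  qed
  have ptw: "(Y b - f0 (T a) (C b))\<^sup>2 = 1 * v1 b + T a * v2 b" if a: "a \<in> space M" and b: "b \<in> space M" for a b
  proof -
    have Yb: "Y b = R b + f0 (T b) (C b)" by (simp add: R_def)
    have "T a = 0 \<or> T a = 1" "T b = 0 \<or> T b = 1" using T_bin a b by auto
    then show ?thesis unfolding v1_def v2_def D_def Yb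
      by (elim disjE) (simp_all add: power2_eq_square algebra_simps)
  qed
  have one_i: "integrable M (\<lambda>_. 1::real)" by simp
  have LHS1: "(\<integral>p. (Y (snd p) - f0 (T (fst p)) (C (snd p)))\<^sup>2 \<partial>(M \<Otimes>\<^sub>M M))
      = (\<integral>w. v1 w \<partial>M) + p * (\<integral>w. v2 w \<partial>M)"
  proof -
    have "(\<integral>p. (Y (snd p) - f0 (T (fst p)) (C (snd p)))\<^sup>2 \<partial>(M \<Otimes>\<^sub>M M))
        = (\<integral>p. 1 * v1 (snd p) + T (fst p) * v2 (snd p) \<partial>(M \<Otimes>\<^sub>M M))"
      by (rule Bochner_Integration.integral_cong) (auto simp: space_pair_measure ptw)
    also have "\<dots> = (\<integral>p. 1 * v1 (snd p) \<partial>(M \<Otimes>\<^sub>M M)) + (\<integral>p. T (fst p) * v2 (snd p) \<partial>(M \<Otimes>\<^sub>M M))"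
      using prod_integral(1)[OF ps one_i v1i] prod_integral(1)[OF ps Ti v2i]
      by (rule Bochner_Integration.integral_add)
    also have "\<dots> = (\<integral>w. v1 w \<partial>M) + p * (\<integral>w. v2 w \<partial>M)"
      using prod_integral(2)[OF ps one_i v1i] prod_integral(2)[OF ps Ti v2i] by (simp add: p_def P.prob_space)
    finally show ?thesis .
  qed
  have LHS2: "(\<integral>w. (Y w - f0 (T w) (C w))\<^sup>2 \<partial>M) = (\<integral>w. (R w)\<^sup>2 \<partial>M)" by (simp add: R_def)
  define A1 where "A1 = (\<integral>w. T w * (cate (C w))\<^sup>2 \<partial>M)"
  define A0 where "A0 = (\<integral>w. (1 - T w) * (cate (C w))\<^sup>2 \<partial>M)"
  have A1D: "(\<integral>w. T w * (D w)\<^sup>2 \<partial>M) = A1" unfolding A1_def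
  proof (rule integral_cong_AE)
    show "AE w in M. T w * (D w)\<^sup>2 = T w * (cate (C w))\<^sup>2" using cateAE by eventually_elim simp
  qed measurable
  have A0D: "(\<integral>w. (1 - T w) * (D w)\<^sup>2 \<partial>M) = A0" unfolding A0_def
  proof (rule integral_cong_AE)
    show "AE w in M. (1 - T w) * (D w)\<^sup>2 = (1 - T w) * (cate (C w))\<^sup>2" using cateAE by eventually_elim simp
  qed measurable
  have LHS: "(\<integral>p. (Y (snd p) - f0 (T (fst p)) (C (snd p)))\<^sup>2 \<partial>(M \<Otimes>\<^sub>M M))
           - (\<integral>w. (Y w - f0 (T w) (C w))\<^sup>2 \<partial>M) = (1 - p) * A1 + p * A0"
    unfolding LHS1 LHS2 v1int v2int D2split A1D A0D by (simp add: algebra_simps)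
  have S1i: "integrable M (indicator S1 :: 'a \<Rightarrow> real)"
    by (intro integrable_real_indicator) (auto simp: less_top[symmetric])
  have pS1: "p = (\<integral>w. (indicator S1 w :: real) \<partial>M)" unfolding p_def
    by (rule Bochner_Integration.integral_cong) (use T_bin in \<open>auto simp: S1_def indicator_def\<close>)
  have Sp: "measure M {w\<in>space M. T w = 1} = p"
  proof -
    have "S1 \<inter> space M = S1" by (auto simp: S1_def)
    then show ?thesis using pS1 by (simp add: S1_def)
  qed
  have S0: "measure M {w\<in>space M. T w = 0} = 1 - p"
  proof -
    have "{w\<in>space M. T w = 0} = space M - S1" using T_bin by (auto simp: S1_def)
    then show ?thesis using P.prob_compl[OF S1m] Sp by (simp add: S1_def)
  qed
  have E1: "(\<integral>w. (cate (C w))\<^sup>2 * indicator {w\<in>space M. T w = 1} w \<partial>M) = A1" unfolding A1_def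
    by (rule Bochner_Integration.integral_cong) (use T_bin in \<open>auto simp: indicator_def\<close>)
  have E0: "(\<integral>w. (cate (C w))\<^sup>2 * indicator {w\<in>space M. T w = 0} w \<partial>M) = A0" unfolding A0_def
    by (rule Bochner_Integration.integral_cong) (use T_bin in \<open>auto simp: indicator_def\<close>)
  have var: "P.variance T = p - p\<^sup>2"
  proof -
    have "P.variance T = (\<integral>w. (1 - 2 * p) * T w + p\<^sup>2 \<partial>M)" unfolding p_def[symmetric]
      by (rule Bochner_Integration.integral_cong) (use T_bin in \<open>auto simp: power2_eq_square algebra_simps\<close>)
    also have "\<dots> = (1 - 2 * p) * p + p\<^sup>2" using Ti by (simp add: p_def[symmetric] P.prob_space)
    finally show ?thesis by (simp add: power2_eq_square algebra_simps)
  qed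
  have qi: "integrable M q" unfolding q_def by (rule G.real_cond_exp_int(1)[OF S1i])
  have pq: "p = (\<integral>w. q w \<partial>M)" unfolding q_def pS1 by (rule G.real_cond_exp_int(2)[OF S1i, symmetric])
  have ppos: "0 < p"
  proof -
    have nn: "AE w in M. 0 \<le> q w" using qpos by eventually_elim simp
    have "0 \<le> (\<integral>w. q w \<partial>M)" by (rule integral_nonneg_AE[OF nn])
    moreover have "(\<integral>w. q w \<partial>M) \<noteq> 0"
    proof
      assume "(\<integral>w. q w \<partial>M) = 0"
      then have "AE w in M. q w = 0" using integral_nonneg_eq_0_iff_AE[OF qi nn] by simp
      with qpos have "AE w in M. False" by eventually_elim simp
      then show False by (simp add: P.AE_False)
    qed
    ultimately show ?thesis using pq by simp
  qed
  have plt: "p < 1"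
  proof -
    have qi': "integrable M (\<lambda>w. 1 - q w)" using qi by simp
    have nn: "AE w in M. 0 \<le> 1 - q w" using qpos by eventually_elim simp
    have e: "(\<integral>w. 1 - q w \<partial>M) = 1 - p" using qi by (simp add: pq P.prob_space)
    have "0 \<le> (\<integral>w. 1 - q w \<partial>M)" by (rule integral_nonneg_AE[OF nn])
    moreover have "(\<integral>w. 1 - q w \<partial>M) \<noteq> 0"
    proof
      assume "(\<integral>w. 1 - q w \<partial>M) = 0"
      then have "AE w in M. 1 - q w = 0" using integral_nonneg_eq_0_iff_AE[OF qi' nn] by simp
      with qpos have "AE w in M. False" by eventually_elim simp
      then show False by (simp add: P.AE_False)
    qed
    ultimately show ?thesis using e by simp
  qed
  have RHS: "prob_space.variance M T *
           (\<Sum>t\<in>{0::real, 1}. expectation_given_event M {w\<in>space M. T w = t} (\<lambda>w. (cate (C w))\<^sup>2))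
      = (p - p\<^sup>2) * (A0 / (1 - p) + A1 / p)"
    using var by (simp add: expectation_given_event_def E1 E0 Sp S0)
  have fin: "(p - p\<^sup>2) * (A0 / (1 - p) + A1 / p) = (1 - p) * A1 + p * A0"
  proof -
    have "1 - p \<noteq> 0" "p \<noteq> 0" using ppos plt by auto
    then show ?thesis by (simp add: field_simps power2_eq_square)
  qed
  show ?thesis using LHS RHS fin by simp
qed

end
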